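(* Let $\mathcal P$ be a finite set with $|\mathcal P|=n$, $\kappa\in(0,1)$, $\lambda>0$, $\ell_1,\ell_2,\dots:\mathcal P\to[0,1]$, $\mu_1(i)=\kappa$ for all $i$, $\Gamma$ the set of $\kappa$-dense measures on $\mathcal P$, and for $t\ge1$, $\mu_{t+1}=\Pi_\Gamma\tilde\mu_{t+1}$ with $\tilde\mu_{t+1}(i)=e^{-\lambda\sum_{s=1}^t\ell_s(i)}\mu_1(i)$. Writing $M(\hat\mu,Q_t)=\mathbb{E}_{i\sim\hat\mu}[\ell_t(i)]$, for every $T$ and every $\mu\in\Gamma$, \[ \sum_{t=1}^TM(\hat\mu_{t+1},Q_t)\le\sum_{t=1}^TM(\hat\mu,Q_t)+\frac{\mathrm{KL}(\mu\|\mu_1)}{\lambda\kappa n}. \]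
   Context: A measure on $\mathcal P$ is $\mu:\mathcal P\to[0,1]$; $|\mu|=\sum_i\mu(i)$; $\kappa$-dense means $|\mu|/n\ge\kappa$; $\hat\mu=\mu/|\mu|$. $\mathrm{KL}(\mu_1\|\mu_2)=\sum_i\mu_1(i)\log(\mu_1(i)/\mu_2(i))+\mu_2(i)-\mu_1(i)$. $\Pi_\Gamma\tilde\mu=\arg\min_{\mu\in\Gamma}\mathrm{KL}(\mu\|\tilde\mu)$. $Q_t$ is the column strategy of round $t$, inducing loss vector $\ell_t$. *)

theory Defs
  imports Complex_Main
begin

text \<open>Measures on a finite ground set P are functions into [0,1]; only values on P matter.\<close>

definition is_measure :: "'a set \<Rightarrow> ('a \<Rightarrow> real) \<Rightarrow> bool" where
  "is_measure P \<mu> \<longleftrightarrow> (\<forall>i\<in>P. 0 \<le> \<mu> i \<and> \<mu> i \<le> 1)"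

definition mass :: "'a set \<Rightarrow> ('a \<Rightarrow> real) \<Rightarrow> real" where
  "mass P \<mu> = (\<Sum>i\<in>P. \<mu> i)"

definition dense_measures :: "'a set \<Rightarrow> real \<Rightarrow> ('a \<Rightarrow> real) set" where
  "dense_measures P \<kappa> = {\<mu>. is_measure P \<mu> \<and> mass P \<mu> / real (card P) \<ge> \<kappa>}"

definition normalize :: "'a set \<Rightarrow> ('a \<Rightarrow> real) \<Rightarrow> 'a \<Rightarrow> real" where
  "normalize P \<mu> = (\<lambda>i. \<mu> i / mass P \<mu>)"

definition KL :: "'a set \<Rightarrow> ('a \<Rightarrow> real) \<Rightarrow> ('a \<Rightarrow> real) \<Rightarrow> real" where
  "KL P \<mu>1 \<mu>2 = (\<Sum>i\<in>P. \<mu>1 i * ln (\<mu>1 i / \<mu>2 i) + \<mu>2 i - \<mu>1 i)"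

definition is_KL_proj :: "'a set \<Rightarrow> ('a \<Rightarrow> real) set \<Rightarrow> ('a \<Rightarrow> real) \<Rightarrow> ('a \<Rightarrow> real) \<Rightarrow> bool" where
  "is_KL_proj P \<Gamma> \<mu>' \<nu> \<longleftrightarrow> \<nu> \<in> \<Gamma> \<and> (\<forall>\<rho>\<in>\<Gamma>. KL P \<nu> \<mu>' \<le> KL P \<rho> \<mu>')"

definition expected_loss :: "'a set \<Rightarrow> ('a \<Rightarrow> real) \<Rightarrow> ('a \<Rightarrow> real) \<Rightarrow> real" where
  "expected_loss P \<mu>hat loss = (\<Sum>i\<in>P. \<mu>hat i * loss i)"

end

theory Submission
  imports Defs
begin
lemma term_shift:
  fixes u w a :: real assumes "u \<ge> 0" "w > 0"
  shows "u * ln (u / (exp (- a) * w)) + exp (- a) * w - u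
       = (u * ln (u / w) + w - u) + u * a + (exp (- a) * w - w)"
proof (cases "u = 0")
  case True then show ?thesis by simp
next
  case False
  then have "u > 0" using assms by simp
  then have "ln (u / (exp (- a) * w)) = ln (u / w) + a"
    using assms by (simp add: ln_div ln_mult)
  then show ?thesis by (simp add: algebra_simps)
qed

lemma KL_shift:
  assumes "finite P" "\<forall>i\<in>P. u i \<ge> 0" "\<forall>i\<in>P. w i > 0"
  shows "KL P u (\<lambda>i. exp (- a i) * w i) = KL P u w + (\<Sum>i\<in>P. u i * a i)
          + (\<Sum>i\<in>P. exp (- a i) * w i - w i)"
proof -
  have "KL P u (\<lambda>i. exp (- a i) * w i) = (\<Sum>i\<in>P. (u i * ln (u i / w i) + w i - u i) + u i * a i + (exp (- a i) * w i - w i))"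
    unfolding KL_def using assms by (intro sum.cong) (auto simp: term_shift)
  also have "\<dots> = KL P u w + (\<Sum>i\<in>P. u i * a i) + (\<Sum>i\<in>P. exp (- a i) * w i - w i)"
    unfolding KL_def sum.distrib[symmetric] by (rule sum.cong) (auto simp: algebra_simps)
  finally show ?thesis .
qed

lemma KL_nonneg:
  assumes "\<forall>i\<in>P. u i \<ge> 0" "\<forall>i\<in>P. w i > 0"
  shows "KL P u w \<ge> 0"
  unfolding KL_def
proof (rule sum_nonneg)
  fix i assume i: "i \<in> P"
  show "0 \<le> u i * ln (u i / w i) + w i - u i"
  proof (cases "u i = 0")
    case True then show ?thesis using assms(2) i by fastforce
  next
    case False
    then have up: "u i > 0" using assms i by force
    have wp: "w i > 0" using assms i by auto
    have "ln (w i / u i) \<le> w i / u i - 1" using up wp by (intro ln_le_minus_one) auto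
    moreover have "ln (w i / u i) = - ln (u i / w i)" using up wp by (simp add: ln_div)
    ultimately have "1 - w i / u i \<le> ln (u i / w i)" by linarith
    then have "u i * (1 - w i / u i) \<le> u i * ln (u i / w i)" using up by (intro mult_left_mono) auto
    moreover have "u i * (1 - w i / u i) = u i - w i" using up by (simp add: field_simps)
    ultimately show ?thesis by linarith
  qed
qed

lemma logsum:
  fixes \<mu> :: "'a \<Rightarrow> real"
  assumes "finite P" "\<forall>i\<in>P. \<mu> i \<ge> 0" "card P = n" "n > 0" "(\<Sum>i\<in>P. \<mu> i) = m" "m > 0"
  shows "(\<Sum>i\<in>P. \<mu> i * ln (\<mu> i * n / m)) \<ge> 0"
proof -
  have "(\<Sum>i\<in>P. \<mu> i - m / n) \<le> (\<Sum>i\<in>P. \<mu> i * ln (\<mu> i * n / m))"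
  proof (rule sum_mono)
    fix i assume i: "i \<in> P"
    show "\<mu> i - m / n \<le> \<mu> i * ln (\<mu> i * n / m)"
    proof (cases "\<mu> i = 0")
      case True then show ?thesis using assms by simp
    next
      case False
      then have up: "\<mu> i > 0" using assms i by force
      define x where "x = \<mu> i * n / m"
      have xp: "x > 0" using up assms unfolding x_def by simp
      have "ln (1 / x) \<le> 1 / x - 1" using xp by (intro ln_le_minus_one) auto
      then have "1 - 1 / x \<le> ln x" using xp by (simp add: ln_div)
      then have "\<mu> i * (1 - 1 / x) \<le> \<mu> i * ln x" using up by (intro mult_left_mono) auto
      moreover have "\<mu> i * (1 - 1 / x) = \<mu> i - m / n" using up assms unfolding x_def by (simp add: field_simps)
      ultimately show ?thesis unfolding x_def by linarith
    qed
  qed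
  moreover have "(\<Sum>i\<in>P. \<mu> i - m / n) = 0" using assms by (simp add: sum_subtractf)
  ultimately show ?thesis by linarith
qed

lemma KL_scale:
  fixes \<mu> :: "'a \<Rightarrow> real" and \<kappa> c m :: real
  assumes finP: "finite P" and nn: "\<forall>i\<in>P. \<mu> i \<ge> 0" and cP: "card P = n" and np: "n > 0"
    and mdef: "(\<Sum>i\<in>P. \<mu> i) = m" and mge: "m \<ge> \<kappa> * n" and kp: "\<kappa> > 0"
    and cdef: "c = \<kappa> * n / m"
  shows "KL P (\<lambda>i. c * \<mu> i) (\<lambda>_. \<kappa>) \<le> KL P \<mu> (\<lambda>_. \<kappa>)"
proof -
  have mp: "m > 0" using mge kp np by (smt (verit) mult_pos_pos of_nat_0_less_iff)
  have cp: "c > 0" using cdef mp kp np by simp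
  have cm: "c * m = \<kappa> * n" using cdef mp by simp
  have "c * m \<le> 1 * m" using cm mge by simp
  then have c1: "c \<le> 1" using mp by (rule mult_right_le_imp_le)
  define A where "A = (\<Sum>i\<in>P. \<mu> i * ln (\<mu> i / \<kappa>))"
  have t1: "c * \<mu> i * ln (c * \<mu> i / \<kappa>) = c * (\<mu> i * ln (\<mu> i / \<kappa>)) + ln c * c * \<mu> i"
    if "i \<in> P" for i
  proof (cases "\<mu> i = 0")
    case True then show ?thesis by simp
  next
    case False
    then have "\<mu> i > 0" using nn that by force
    then have "ln (c * \<mu> i / \<kappa>) = ln c + ln (\<mu> i / \<kappa>)" using cp kp
      using ln_mult[of c "\<mu> i / \<kappa>"] by (simp add: mult.assoc)
    then show ?thesis by (simp add: algebra_simps)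
  qed
  have "KL P (\<lambda>i. c * \<mu> i) (\<lambda>_. \<kappa>) = (\<Sum>i\<in>P. c * (\<mu> i * ln (\<mu> i / \<kappa>)) + ln c * c * \<mu> i + \<kappa> - c * \<mu> i)"
    unfolding KL_def using t1 by (intro sum.cong) auto
  also have "\<dots> = c * A + ln c * c * m + n * \<kappa> - c * m"
    unfolding A_def using cP mdef by (simp add: sum.distrib sum_subtractf sum_distrib_left[symmetric])
  finally have K1: "KL P (\<lambda>i. c * \<mu> i) (\<lambda>_. \<kappa>) = c * A + ln c * (\<kappa> * n)"
    using cm by (simp add: algebra_simps)
  have K2: "KL P \<mu> (\<lambda>_. \<kappa>) = A + n * \<kappa> - m"
    unfolding KL_def A_def using cP mdef by (simp add: sum.distrib sum_subtractf)
  have t2: "\<mu> i * ln (\<mu> i / \<kappa>) = \<mu> i * ln (\<mu> i * n / m) - \<mu> i * ln c" if "i \<in> P" for i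
  proof (cases "\<mu> i = 0")
    case True then show ?thesis by simp
  next
    case False
    then have up: "\<mu> i > 0" using nn that by force
    have "\<mu> i / \<kappa> = (\<mu> i * n / m) / c" using cdef mp kp np by (simp add: field_simps)
    then have "ln (\<mu> i / \<kappa>) = ln (\<mu> i * n / m) - ln c" using up mp np cp by (simp add: ln_div ln_mult)
    then show ?thesis by (simp add: right_diff_distrib)
  qed
  have "A = (\<Sum>i\<in>P. \<mu> i * ln (\<mu> i * n / m)) - m * ln c"
    unfolding A_def using t2 mdef by (simp add: sum_subtractf sum_distrib_right[symmetric])
  then have Age: "A \<ge> - m * ln c" using logsum[OF finP nn cP np mdef mp] by linarith
  have h1: "(1 - c) * A \<ge> (1 - c) * (- m * ln c)" using Age c1 by (intro mult_left_mono) auto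
  have "ln c \<le> c - 1" using cp by (rule ln_le_minus_one)
  then have h2: "m * ln c \<le> m * (c - 1)" using mp by (intro mult_left_mono) auto
  have h3: "ln c * (\<kappa> * n) = c * m * ln c" using cm by simp
  have h4: "n * \<kappa> = c * m" using cm by simp
  have e1: "(1 - c) * A = A - c * A" by (simp add: algebra_simps)
  have e2: "(1 - c) * (- m * ln c) = c * m * ln c - m * ln c" by (simp add: algebra_simps)
  have e3: "m * (c - 1) = c * m - m" by (simp add: algebra_simps)
  show ?thesis unfolding K1 K2 using h1 h2 h3 h4 e1 e2 e3 by linarith
qed



theorem mainTheorem8:
  fixes P :: "'a set" and n :: nat and \<kappa> lam :: real
    and loss :: "nat \<Rightarrow> 'a \<Rightarrow> real" and \<mu>s :: "nat \<Rightarrow> 'a \<Rightarrow> real"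
  assumes finP: "finite P" and neP: "P \<noteq> {}" and n_def: "card P = n"
    and kappa: "0 < \<kappa>" "\<kappa> < 1" and lam_pos: "lam > 0"
    and loss_bnd: "\<And>t i. t \<ge> 1 \<Longrightarrow> i \<in> P \<Longrightarrow> 0 \<le> loss t i \<and> loss t i \<le> 1"
    and init: "\<And>i. i \<in> P \<Longrightarrow> \<mu>s 1 i = \<kappa>"
    and step: "\<And>t. t \<ge> 1 \<Longrightarrow> is_KL_proj P (dense_measures P \<kappa>)
                 (\<lambda>i. exp (- lam * (\<Sum>s=1..t. loss s i)) * \<mu>s 1 i) (\<mu>s (Suc t))"
  shows "\<forall>T::nat. \<forall>\<mu> \<in> dense_measures P \<kappa>.
     (\<Sum>t=1..T. expected_loss P (normalize P (\<mu>s (Suc t))) (loss t))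
       \<le> (\<Sum>t=1..T. expected_loss P (normalize P \<mu>) (loss t))
          + KL P \<mu> (\<mu>s 1) / (lam * \<kappa> * real n)"
proof (intro allI ballI)
  fix T :: nat and \<mu> assume \<mu>G: "\<mu> \<in> dense_measures P \<kappa>"
  define \<Gamma> where "\<Gamma> = dense_measures P \<kappa>"
  define Lm where "Lm T i = (\<Sum>s=1..T. loss s i)" for T i
  define F where "F T u = (\<Sum>i\<in>P. u i * Lm T i) + KL P u (\<mu>s 1) / lam" for T u
  define S where "S T = (\<Sum>t=1..T. (\<Sum>i\<in>P. \<mu>s (Suc t) i * loss t i))" for T
  have "card P > 0" using finP neP by (simp add: card_gt_0_iff)
  then have np: "n > 0" using n_def by simp
  have Gnn: "\<forall>i\<in>P. 0 \<le> u i \<and> u i \<le> 1" if "u \<in> \<Gamma>" for u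
    using that unfolding \<Gamma>_def dense_measures_def is_measure_def by auto
  have Gmass: "mass P u \<ge> \<kappa> * n" if "u \<in> \<Gamma>" for u
    using that np n_def unfolding \<Gamma>_def dense_measures_def by (simp add: field_simps)
  have xin: "\<mu>s (Suc t) \<in> \<Gamma>" if "t \<ge> 1" for t
    using step[OF that] unfolding is_KL_proj_def \<Gamma>_def by auto
  have wpos: "\<forall>i\<in>P. \<mu>s 1 i > 0" using init kappa by auto
  have KLeq: "KL P u (\<lambda>i. exp (- lam * Lm T i) * \<mu>s 1 i)
      = lam * (\<Sum>i\<in>P. u i * Lm T i) + KL P u (\<mu>s 1) + (\<Sum>i\<in>P. exp (- (lam * Lm T i)) * \<mu>s 1 i - \<mu>s 1 i)"
    if "u \<in> \<Gamma>" for u T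
  proof -
    have "(\<lambda>i. exp (- lam * Lm T i) * \<mu>s 1 i) = (\<lambda>i. exp (- (lam * Lm T i)) * \<mu>s 1 i)" by simp
    moreover have "(\<Sum>i\<in>P. u i * (lam * Lm T i)) = lam * (\<Sum>i\<in>P. u i * Lm T i)"
      by (simp add: sum_distrib_left algebra_simps)
    ultimately show ?thesis using KL_shift[OF finP _ wpos, of u "\<lambda>i. lam * Lm T i"] Gnn[OF that] by simp
  qed
  have minF: "F T (\<mu>s (Suc T)) \<le> F T u" if "u \<in> \<Gamma>" for u T
  proof (cases "T = 0")
    case True
    have "KL P (\<mu>s 1) (\<mu>s 1) = 0" unfolding KL_def using wpos by (intro sum.neutral) auto
    moreover have "KL P u (\<mu>s 1) \<ge> 0" using KL_nonneg[of P u "\<mu>s 1"] Gnn[OF that] wpos by auto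
    ultimately show ?thesis using True lam_pos unfolding F_def Lm_def by simp
  next
    case False
    then have "T \<ge> 1" by simp
    from step[OF this] have "KL P (\<mu>s (Suc T)) (\<lambda>i. exp (- lam * Lm T i) * \<mu>s 1 i)
         \<le> KL P u (\<lambda>i. exp (- lam * Lm T i) * \<mu>s 1 i)"
      using that unfolding is_KL_proj_def \<Gamma>_def Lm_def by auto
    then have "lam * (\<Sum>i\<in>P. \<mu>s (Suc T) i * Lm T i) + KL P (\<mu>s (Suc T)) (\<mu>s 1)
        \<le> lam * (\<Sum>i\<in>P. u i * Lm T i) + KL P u (\<mu>s 1)"
      using KLeq[OF that, of T] KLeq[OF xin[OF \<open>T \<ge> 1\<close>], of T] by simp
    then have "(lam * (\<Sum>i\<in>P. \<mu>s (Suc T) i * Lm T i) + KL P (\<mu>s (Suc T)) (\<mu>s 1)) / lam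
        \<le> (lam * (\<Sum>i\<in>P. u i * Lm T i) + KL P u (\<mu>s 1)) / lam"
      using lam_pos by (intro divide_right_mono) auto
    then show ?thesis unfolding F_def using lam_pos by (simp add: add_divide_distrib)
  qed
  have SF: "S T \<le> F T (\<mu>s (Suc T))" for T
  proof (induction T)
    case 0
    have "KL P (\<mu>s 1) (\<mu>s 1) = 0" unfolding KL_def using wpos by (intro sum.neutral) auto
    then show ?case unfolding S_def F_def Lm_def by simp
  next
    case (Suc T)
    have Fs: "F (Suc T) y = F T y + (\<Sum>i\<in>P. y i * loss (Suc T) i)" for y
      unfolding F_def Lm_def by (simp add: sum.distrib algebra_simps)
    have Ss: "S (Suc T) = S T + (\<Sum>i\<in>P. \<mu>s (Suc (Suc T)) i * loss (Suc T) i)"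
      unfolding S_def by simp
    have "F T (\<mu>s (Suc T)) \<le> F T (\<mu>s (Suc (Suc T)))" using minF xin[of "Suc T"] by simp
    then show ?case using Suc.IH Fs Ss by simp
  qed
  define m where "m = mass P \<mu>"
  have \<mu>nn: "\<forall>i\<in>P. 0 \<le> \<mu> i" using Gnn[of \<mu>] \<mu>G \<Gamma>_def by auto
  have mge: "m \<ge> \<kappa> * n" using Gmass[of \<mu>] \<mu>G \<Gamma>_def m_def by auto
  have mp: "m > 0" using mge kappa np by (smt (verit) mult_pos_pos of_nat_0_less_iff)
  define c where "c = \<kappa> * n / m"
  have cp: "c > 0" using c_def mp kappa np by simp
  have cm: "c * m = \<kappa> * n" using c_def mp by simp
  have "c * m \<le> 1 * m" using cm mge by simp
  then have c1: "c \<le> 1" using mp by (rule mult_right_le_imp_le)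
  define u where "u = (\<lambda>i. c * \<mu> i)"
  have uG: "u \<in> \<Gamma>"
  proof -
    have "is_measure P u" unfolding is_measure_def u_def
    proof
      fix i assume "i \<in> P"
      then have "0 \<le> \<mu> i" "\<mu> i \<le> 1" using Gnn[of \<mu>] \<mu>G \<Gamma>_def by auto
      then show "0 \<le> c * \<mu> i \<and> c * \<mu> i \<le> 1" using cp c1 by (simp add: mult_le_one)
    qed
    moreover have "mass P u = \<kappa> * n" unfolding u_def mass_def
      using cm m_def unfolding mass_def by (simp add: sum_distrib_left[symmetric])
    ultimately show ?thesis unfolding \<Gamma>_def dense_measures_def using np n_def by simp
  qed
  have KLu: "KL P u (\<mu>s 1) \<le> KL P \<mu> (\<mu>s 1)"
  proof -
    have a: "KL P v (\<mu>s 1) = KL P v (\<lambda>_. \<kappa>)" for v unfolding KL_def using init by (intro sum.cong) auto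
    show ?thesis unfolding a u_def
      using KL_scale[OF finP \<mu>nn n_def np _ mge kappa(1) c_def] m_def unfolding mass_def by simp
  qed
  define X where "X = (\<Sum>i\<in>P. \<mu> i * Lm T i)"
  have FTu: "F T u = c * X + KL P u (\<mu>s 1) / lam"
    unfolding F_def u_def X_def by (simp add: sum_distrib_left algebra_simps)
  have ST: "S T \<le> c * X + KL P \<mu> (\<mu>s 1) / lam"
    using SF[of T] minF[OF uG, of T] FTu KLu lam_pos
    by (smt (verit) divide_right_mono)
  have lhs: "(\<Sum>t=1..T. expected_loss P (normalize P (\<mu>s (Suc t))) (loss t)) \<le> S T / (\<kappa> * n)"
  proof -
    have "(\<Sum>t=1..T. expected_loss P (normalize P (\<mu>s (Suc t))) (loss t))
        \<le> (\<Sum>t=1..T. (\<Sum>i\<in>P. \<mu>s (Suc t) i * loss t i) / (\<kappa> * n))"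
    proof (rule sum_mono)
      fix t assume "t \<in> {1..T}"
      then have t1: "t \<ge> 1" by simp
      have xn: "\<forall>i\<in>P. 0 \<le> \<mu>s (Suc t) i" using Gnn[OF xin[OF t1]] by auto
      have ipn: "(\<Sum>i\<in>P. \<mu>s (Suc t) i * loss t i) \<ge> 0"
        using xn loss_bnd[OF t1] by (intro sum_nonneg) auto
      have mm: "mass P (\<mu>s (Suc t)) \<ge> \<kappa> * n" using Gmass[OF xin[OF t1]] .
      have kn: "\<kappa> * n > 0" using kappa np by simp
      have "expected_loss P (normalize P (\<mu>s (Suc t))) (loss t)
          = (\<Sum>i\<in>P. \<mu>s (Suc t) i * loss t i) / mass P (\<mu>s (Suc t))"
        unfolding expected_loss_def normalize_def by (simp add: sum_divide_distrib)
      also have "\<dots> \<le> (\<Sum>i\<in>P. \<mu>s (Suc t) i * loss t i) / (\<kappa> * n)"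
        using ipn mm kn by (intro divide_left_mono) auto
      finally show "expected_loss P (normalize P (\<mu>s (Suc t))) (loss t)
          \<le> (\<Sum>i\<in>P. \<mu>s (Suc t) i * loss t i) / (\<kappa> * n)" .
    qed
    also have "\<dots> = S T / (\<kappa> * n)" unfolding S_def by (simp add: sum_divide_distrib)
    finally show ?thesis .
  qed
  have rhs: "(\<Sum>t=1..T. expected_loss P (normalize P \<mu>) (loss t)) = X / m"
  proof -
    have "(\<Sum>t=1..T. expected_loss P (normalize P \<mu>) (loss t))
        = (\<Sum>t=1..T. \<Sum>i\<in>P. \<mu> i * loss t i / m)"
      unfolding expected_loss_def normalize_def m_def by simp
    also have "\<dots> = (\<Sum>i\<in>P. \<Sum>t=1..T. \<mu> i * loss t i / m)" by (rule sum.swap)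
    also have "\<dots> = X / m" unfolding X_def Lm_def
      by (simp add: sum_divide_distrib sum_distrib_left)
    finally show ?thesis .
  qed
  have kn: "\<kappa> * n > 0" using kappa np by simp
  have "S T / (\<kappa> * n) \<le> (c * X + KL P \<mu> (\<mu>s 1) / lam) / (\<kappa> * n)"
    using ST kn by (intro divide_right_mono) auto
  also have "\<dots> = X / m + KL P \<mu> (\<mu>s 1) / (lam * \<kappa> * real n)"
  proof -
    have "c * X / (\<kappa> * n) = X / m" using c_def kn mp kappa np by simp
    moreover have "KL P \<mu> (\<mu>s 1) / lam / (\<kappa> * n) = KL P \<mu> (\<mu>s 1) / (lam * \<kappa> * real n)"
      by (simp add: divide_divide_eq_left mult.assoc)
    ultimately show ?thesis by (simp add: add_divide_distrib)
  qed
  finally show "(\<Sum>t=1..T. expected_loss P (normalize P (\<mu>s (Suc t))) (loss t))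
       \<le> (\<Sum>t=1..T. expected_loss P (normalize P \<mu>) (loss t))
          + KL P \<mu> (\<mu>s 1) / (lam * \<kappa> * real n)"
    using lhs rhs by simp
qed

end
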